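(* For every integer $k\ge 1$, the complete $(k+1)$-partite graph $K_{1,1,2,\ldots,k}$ (with parts of sizes $1,1,2,3,\ldots,k$) is uniquely $k$-list colorable.
   Context: All graphs are finite, simple and undirected. A list assignment $L$ for a graph $G$ assigns to each vertex $v$ a set $L(v)$ of colors; an $L$-coloring is a proper vertex coloring $c$ of $G$ with $c(v)\in L(v)$ for every vertex $v$. A $k$-list assignment is a list assignment with $|L(v)|=k$ for all $v$. $G$ is uniquely $k$-list colorable (U$k$LC) if there exists a $k$-list assignment $L$ such that $G$ has exactly one $L$-coloring. *)

theory Defs
  imports Main
begin

definition simple_graph :: "'a set \<Rightarrow> ('a \<Rightarrow> 'a \<Rightarrow> bool) \<Rightarrow> bool" where
  "simple_graph V E \<longleftrightarrow> finite V \<and> (\<forall>u v. E u v \<longrightarrow> u \<in> V \<and> v \<in> V)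
     \<and> (\<forall>u v. E u v \<longrightarrow> E v u) \<and> (\<forall>v. \<not> E v v)"

definition L_coloring ::
  "'a set \<Rightarrow> ('a \<Rightarrow> 'a \<Rightarrow> bool) \<Rightarrow> ('a \<Rightarrow> 'c set) \<Rightarrow> ('a \<Rightarrow> 'c) \<Rightarrow> bool" where
  "L_coloring V E L c \<longleftrightarrow>
     (\<forall>v\<in>V. c v \<in> L v) \<and> (\<forall>u\<in>V. \<forall>v\<in>V. E u v \<longrightarrow> c u \<noteq> c v)
     \<and> (\<forall>v. v \<notin> V \<longrightarrow> c v = undefined)"

definition k_list_assignment :: "'a set \<Rightarrow> nat \<Rightarrow> ('a \<Rightarrow> 'c set) \<Rightarrow> bool" where
  "k_list_assignment V k L \<longleftrightarrow> (\<forall>v\<in>V. finite (L v) \<and> card (L v) = k)"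

definition uniquely_k_list_colorable :: "'a set \<Rightarrow> ('a \<Rightarrow> 'a \<Rightarrow> bool) \<Rightarrow> nat \<Rightarrow> bool" where
  "uniquely_k_list_colorable V E k \<longleftrightarrow>
     (\<exists>L :: 'a \<Rightarrow> nat set. k_list_assignment V k L \<and> (\<exists>!c. L_coloring V E L c))"

definition cmp_vertices :: "nat \<Rightarrow> (nat \<Rightarrow> nat) \<Rightarrow> (nat \<times> nat) set" where
  "cmp_vertices m s = {(i, j). i < m \<and> j < s i}"

definition cmp_edges :: "nat \<Rightarrow> (nat \<Rightarrow> nat) \<Rightarrow> nat \<times> nat \<Rightarrow> nat \<times> nat \<Rightarrow> bool" where
  "cmp_edges m s u v \<longleftrightarrow> u \<in> cmp_vertices m s \<and> v \<in> cmp_vertices m s \<and> fst u \<noteq> fst v"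

definition K_sizes :: "nat \<Rightarrow> nat" where
  "K_sizes i = (if i = 0 then 1 else i)"

end

theory Submission
  imports Defs
begin

lemma K_sizes_pos: "K_sizes i \<ge> 1 \<or> i = 0" and K_sizes_ge1: "K_sizes i \<ge> 1"
  by (auto simp: K_sizes_def)

theorem mainTheorem17:
  fixes k :: nat
  assumes "k \<ge> 1"
  shows "uniquely_k_list_colorable (cmp_vertices (k + 1) K_sizes) (cmp_edges (k + 1) K_sizes) k"
proof -
  define V where "V = cmp_vertices (k + 1) K_sizes"
  define E where "E = cmp_edges (k + 1) K_sizes"
  define L :: "nat \<times> nat \<Rightarrow> nat set" where
    "L = (\<lambda>v. {0..k} - {if fst v = 0 then 1 else snd v})"
  define c0 :: "nat \<times> nat \<Rightarrow> nat" where "c0 = (\<lambda>v. if v \<in> V then fst v else undefined)"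
  have memV: "(i, j) \<in> V \<longleftrightarrow> i \<le> k \<and> j < K_sizes i" for i j
    by (auto simp: V_def cmp_vertices_def)
  have E_iff: "E u v \<longleftrightarrow> u \<in> V \<and> v \<in> V \<and> fst u \<noteq> fst v" for u v
    by (simp add: E_def V_def cmp_edges_def)
  have i0: "(i, 0) \<in> V" if "i \<le> k" for i
    using that K_sizes_ge1[of i] by (simp add: memV)
  have kl: "k_list_assignment V k L"
    unfolding k_list_assignment_def
  proof
    fix v assume "v \<in> V"
    obtain i j where v: "v = (i, j)" by (cases v)
    have "(if fst v = 0 then 1 else snd v) \<in> {0..k}"
      using \<open>v \<in> V\<close> assms by (auto simp: v memV K_sizes_def)
    then show "finite (L v) \<and> card (L v) = k"
      by (simp add: L_def)
  qed
  have c0col: "L_coloring V E L c0"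
    unfolding L_coloring_def
  proof (intro conjI ballI allI impI)
    fix v assume "v \<in> V"
    obtain i j where v: "v = (i, j)" by (cases v)
    show "c0 v \<in> L v"
      using \<open>v \<in> V\<close> by (auto simp: v memV K_sizes_def c0_def L_def split: if_splits)
  next
    fix u v assume "u \<in> V" "v \<in> V" "E u v"
    then show "c0 u \<noteq> c0 v" by (simp add: E_iff c0_def)
  next
    fix v assume "v \<notin> V" then show "c0 v = undefined" by (simp add: c0_def)
  qed
  have uniq: "c = c0" if c: "L_coloring V E L c" for c
  proof -
    have inL: "c v \<in> L v" if "v \<in> V" for v using c that by (simp add: L_coloring_def)
    have ne: "c u \<noteq> c v" if "u \<in> V" "v \<in> V" "fst u \<noteq> fst v" for u v
      using c that by (simp add: L_coloring_def E_iff)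
    have out: "c v = undefined" if "v \<notin> V" for v using c that unfolding L_coloring_def by blast
    define \<sigma> where "\<sigma> = (\<lambda>i. c (i, 0))"
    have inj: "inj_on \<sigma> {0..k}"
      unfolding inj_on_def \<sigma>_def
    proof (intro ballI impI)
      fix x y assume "x \<in> {0..k}" "y \<in> {0..k}" "c (x, 0) = c (y, 0)"
      then show "x = y" using ne[of "(x,0)" "(y,0)"] i0 by force
    qed
    have sub: "\<sigma> ` {0..k} \<subseteq> {0..k}"
      using inL i0 by (auto simp: \<sigma>_def L_def)
    have img: "\<sigma> ` {0..k} = {0..k}"
      using card_image[OF inj] sub by (simp add: card_subset_eq)
    have mono: "c (i, j) = \<sigma> i" if "(i, j) \<in> V" for i j
    proof -
      have "c (i, j) \<in> {0..k}" using inL[OF that] by (simp add: L_def)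
      then obtain i' where i': "i' \<in> {0..k}" "c (i, j) = \<sigma> i'" using img by force
      have "i' = i"
      proof (rule ccontr)
        assume "i' \<noteq> i"
        then have "c (i, j) \<noteq> c (i', 0)" using ne[of "(i,j)" "(i',0)"] that i0 i' by auto
        then show False using i' by (simp add: \<sigma>_def)
      qed
      then show ?thesis using i' by simp
    qed
    have ge: "\<sigma> i \<ge> i" if "i \<le> k" for i
    proof (rule ccontr)
      assume "\<not> i \<le> \<sigma> i"
      then have lt: "\<sigma> i < i" by simp
      then have "i \<noteq> 0" by simp
      then have "(i, \<sigma> i) \<in> V" using lt that by (simp add: memV K_sizes_def)
      then have "c (i, \<sigma> i) \<in> L (i, \<sigma> i)" "c (i, \<sigma> i) = \<sigma> i" using inL mono by auto
      then show False using \<open>i \<noteq> 0\<close> by (simp add: L_def)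
    qed
    have le: "\<sigma> i \<le> k" if "i \<le> k" for i using sub that by fastforce
    have idn: "\<forall>i. k - n \<le> i \<and> i \<le> k \<longrightarrow> \<sigma> i = i" for n
    proof (induction n)
      case 0
      then show ?case using ge le by (auto intro: antisym)
    next
      case (Suc n)
      show ?case
      proof (intro allI impI)
        fix i assume h: "k - Suc n \<le> i \<and> i \<le> k"
        show "\<sigma> i = i"
        proof (cases "k - n \<le> i")
          case True then show ?thesis using Suc h by auto
        next
          case False
          have "\<sigma> i \<noteq> i'" if "i < i'" "i' \<le> k" for i'
          proof
            assume "\<sigma> i = i'"
            moreover have "k - n \<le> i'" using that False h by linarith
            then have "\<sigma> i' = i'" using Suc.IH that by blast
            ultimately have "\<sigma> i = \<sigma> i'" by simp
            then have "i = i'" using inj h that by (auto simp: inj_on_def)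
            then show False using that by simp
          qed
          then have "\<not> \<sigma> i > i" using le[of i] h by fastforce
          then show ?thesis using ge[of i] h by simp
        qed
      qed
    qed
    show "c = c0"
    proof
      fix v show "c v = c0 v"
      proof (cases "v \<in> V")
        case True
        obtain i j where v: "v = (i, j)" by (cases v)
        have "i \<le> k" using True by (simp add: v memV)
        then have "\<sigma> i = i" using idn[of k] by simp
        then show ?thesis using mono True by (simp add: v c0_def)
      next
        case False then show ?thesis by (simp add: out c0_def)
      qed
    qed
  qed
  have "\<exists>!c. L_coloring V E L c" using c0col uniq by blast
  then show ?thesis using kl unfolding uniquely_k_list_colorable_def V_def E_def by blast
qed

end
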